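(* Let $P=\{x\in\mathbb{R}^n: Ax\le b,\ 0\le x_i\le u_i \text{ for } i\in I\}$ be a rational polyhedron with $I=\{1,\dots,l\}$ and positive integers $u_i$, let $P^I=\{x\in P: x_i\in\mathbb{Z}\text{ for } i\in I\}$, and let $\mathcal{B}=(B^1,\dots,B^l)$ be a binarization scheme in which each $B^i\in\Gamma^{u_i}_{u_i}$ is a unimodular binarization polytope. Then \[\operatorname{proj}_x\big(\mathrm{SC}^q(P_{\mathcal{B}},I_{\mathcal{B}})\big)=\mathrm{conv}(P^I),\qquad\text{where } q=\sum_{i=1}^l\lceil\log_2(u_i+1)\rceil.\]
   Context: For positive integers $q,u$, $\Gamma^q_u$ is the set of rational polytopes $B\subseteq\{(x,z)\in\mathbb{R}\times[0,1]^q:0\le x\le u\}$ with $\operatorname{proj}_x(B\cap(\mathbb{R}\times\{0,1\}^q))=\{0,1,\dots,u\}$. $B$ is perfect if for each $x\in\{0,\dots,u\}$ there is a unique $z\in\{0,1\}^q$ with $(x,z)\in B$, and $B=\mathrm{conv}(B\cap(\mathbb{R}\times\{0,1\}^q))$. A perfect $B\in\Gamma^u_u$, $B=\mathrm{conv}\{(j,w^j):j=0,\dots,u\}$ with $w^j\in\{0,1\}^u$, is unimodular if the matrix with columns $w^j-w^0$ ($j=1,\dots,u$) is integral with determinant $\pm1$. With $p=\sum_iu_i$, $P_{\mathcal{B}}=\{(x,z)\in\mathbb{R}^n\times\mathbb{R}^p: x\in P,\ (x_i,z_i)\in B^i\text{ for } i\in I\}$, $z=(z_1,\dots,z_l)$,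 $z_i\in\mathbb{R}^{u_i}$, and $I_{\mathcal{B}}=\{1,\dots,l,n+1,\dots,n+p\}$. Split closure: for $J\subseteq\{1,\dots,N\}$ and $X\subseteq\mathbb{R}^N$, $\mathrm{SC}(X,J)=\bigcap\mathrm{conv}(X\setminus S)$ over all $S=\{y:\pi_0<\pi^Ty<\pi_0+1\}$ with $\pi\in\mathbb{Z}^N$, $\pi_j=0$ for $j\notin J$, $\pi_0\in\mathbb{Z}$; $\mathrm{SC}^1=\mathrm{SC}$ and $\mathrm{SC}^k(X,J)=\mathrm{SC}(\mathrm{SC}^{k-1}(X,J),J)$. *)

theory Defs
  imports Complex_Main "Jordan_Normal_Form.Determinant"
begin

(* Convention: a point of R^N is a function  y :: nat => real  whose coordinates
   are y 1, ..., y N and which vanishes outside {1..N}. *)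

definition vecs :: "nat \<Rightarrow> (nat \<Rightarrow> real) set" where
  "vecs N = {y. \<forall>j. j \<notin> {1..N} \<longrightarrow> y j = 0}"

definition conv :: "('a \<Rightarrow> real) set \<Rightarrow> ('a \<Rightarrow> real) set" where
  "conv S = {y. \<exists>(k::nat) (c::nat \<Rightarrow> real) v.
      (\<forall>i<k. 0 \<le> c i \<and> v i \<in> S) \<and> (\<Sum>i<k. c i) = 1 \<and>
      y = (\<lambda>j. \<Sum>i<k. c i * v i j)}"

definition split_set :: "(nat \<Rightarrow> int) \<Rightarrow> nat set \<Rightarrow> int \<Rightarrow> (nat \<Rightarrow> real) set" where
  "split_set \<pi> J \<pi>0 = {y. real_of_int \<pi>0 < (\<Sum>j\<in>J. real_of_int (\<pi> j) * y j)
                          \<and> (\<Sum>j\<in>J. real_of_int (\<pi> j) * y j) < real_of_int \<pi>0 + 1}"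

(* split closure SC(X,J): intersection over integral pi supported on J (pi_j = 0 for j not in J,
   so pi^T y = sum over j in J of pi_j y_j) and integral pi0 *)
definition SC :: "(nat \<Rightarrow> real) set \<Rightarrow> nat set \<Rightarrow> (nat \<Rightarrow> real) set" where
  "SC X J = \<Inter> {conv (X - split_set \<pi> J \<pi>0) | \<pi> \<pi>0. \<forall>j. j \<notin> J \<longrightarrow> \<pi> j = 0}"

definition SC_iter :: "nat \<Rightarrow> (nat \<Rightarrow> real) set \<Rightarrow> nat set \<Rightarrow> (nat \<Rightarrow> real) set" where
  "SC_iter k X J = ((\<lambda>Y. SC Y J) ^^ k) X"

(* Binarization polytopes: a point (x,z) in R x R^q is encoded as b :: nat => real with
   b 0 = x, b 1..b q = z, and b j = 0 for j > q. *)
definition bvecs :: "nat \<Rightarrow> (nat \<Rightarrow> real) set" where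
  "bvecs q = {b. \<forall>j>q. b j = 0}"

definition binary_on :: "nat \<Rightarrow> (nat \<Rightarrow> real) set" where
  "binary_on q = {b. \<forall>j\<in>{1..q}. b j \<in> {0, 1}}"

definition rational_polytope :: "nat \<Rightarrow> (nat \<Rightarrow> real) set \<Rightarrow> bool" where
  "rational_polytope q B \<longleftrightarrow> (\<exists>V. finite V \<and> V \<subseteq> bvecs q \<and> (\<forall>v\<in>V. \<forall>j. v j \<in> \<rat>) \<and> B = conv V)"

definition Gamma :: "nat \<Rightarrow> nat \<Rightarrow> (nat \<Rightarrow> real) set set" where
  "Gamma q u = {B. rational_polytope q B \<and>
      B \<subseteq> {b \<in> bvecs q. 0 \<le> b 0 \<and> b 0 \<le> real u \<and> (\<forall>j\<in>{1..q}. 0 \<le> b j \<and> b j \<le> 1)} \<and>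
      (\<lambda>b. b 0) ` (B \<inter> binary_on q) = real ` {0..u}}"

definition perfect :: "nat \<Rightarrow> nat \<Rightarrow> (nat \<Rightarrow> real) set \<Rightarrow> bool" where
  "perfect q u B \<longleftrightarrow> B \<in> Gamma q u \<and>
      (\<forall>x\<in>{0..u}. \<exists>!b. b \<in> B \<and> b \<in> binary_on q \<and> b 0 = real x) \<and>
      B = conv (B \<inter> binary_on q)"

(* unimodular: perfect B in Gamma^u_u with B = conv{(j,w^j) : j = 0..u}, w^j in {0,1}^u, and the
   u x u matrix with columns w^j - w^0 (j = 1..u) has determinant +-1 (it is integral
   automatically, its entries being in {-1,0,1}). Matrix entry (r,c) (0-based) is w^(c+1)_(r+1) - w^0_(r+1). *)
definition unimodular :: "nat \<Rightarrow> (nat \<Rightarrow> real) set \<Rightarrow> bool" where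
  "unimodular u B \<longleftrightarrow> perfect u u B \<and>
     (\<exists>w :: nat \<Rightarrow> nat \<Rightarrow> real.
        (\<forall>j\<le>u. \<forall>k\<in>{1..u}. w j k \<in> {0, 1}) \<and>
        B = conv ((\<lambda>j. (\<lambda>k. if k = 0 then real j else if k \<in> {1..u} then w j k else 0)) ` {0..u}) \<and>
        (let M = mat u u (\<lambda>(r, c). w (c + 1) (r + 1) - w 0 (r + 1)) in
           (\<forall>r<u. \<forall>c<u. M $$ (r, c) \<in> \<int>) \<and> (det M = 1 \<or> det M = -1)))"

definition proj_x :: "nat \<Rightarrow> (nat \<Rightarrow> real) \<Rightarrow> (nat \<Rightarrow> real)" where
  "proj_x n y = (\<lambda>j. if j \<in> {1..n} then y j else 0)"

(* offset: block z_i occupies coordinates off+1 .. off+u_i with off = n + u_1 + ... + u_(i-1) *)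
definition zoff :: "nat \<Rightarrow> (nat \<Rightarrow> nat) \<Rightarrow> nat \<Rightarrow> nat" where
  "zoff n u i = n + (\<Sum>k\<in>{1..<i}. u k)"

(* the point (x_i, z_i) of R x R^{u_i} extracted from y in R^{n+p} *)
definition blk :: "nat \<Rightarrow> (nat \<Rightarrow> nat) \<Rightarrow> nat \<Rightarrow> (nat \<Rightarrow> real) \<Rightarrow> (nat \<Rightarrow> real)" where
  "blk n u i y = (\<lambda>j. if j = 0 then y i else if j \<in> {1..u i} then y (zoff n u i + j) else 0)"

definition polyP :: "nat \<Rightarrow> nat \<Rightarrow> (nat \<Rightarrow> nat \<Rightarrow> real) \<Rightarrow> (nat \<Rightarrow> real) \<Rightarrow> nat \<Rightarrow> (nat \<Rightarrow> nat)
                     \<Rightarrow> (nat \<Rightarrow> real) set" where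
  "polyP n m A b l u = {x \<in> vecs n. (\<forall>r<m. (\<Sum>j=1..n. A r j * x j) \<le> b r) \<and>
                                     (\<forall>i\<in>{1..l}. 0 \<le> x i \<and> x i \<le> real (u i))}"

definition mixed_int :: "(nat \<Rightarrow> real) set \<Rightarrow> nat \<Rightarrow> (nat \<Rightarrow> real) set" where
  "mixed_int P l = {x \<in> P. \<forall>i\<in>{1..l}. x i \<in> \<int>}"

definition PB :: "nat \<Rightarrow> (nat \<Rightarrow> real) set \<Rightarrow> nat \<Rightarrow> (nat \<Rightarrow> nat) \<Rightarrow> (nat \<Rightarrow> (nat \<Rightarrow> real) set)
                  \<Rightarrow> (nat \<Rightarrow> real) set" where
  "PB n P l u B = {y \<in> vecs (n + (\<Sum>i=1..l. u i)). proj_x n y \<in> P \<and>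
                     (\<forall>i\<in>{1..l}. blk n u i y \<in> B i)}"

definition IB :: "nat \<Rightarrow> nat \<Rightarrow> (nat \<Rightarrow> nat) \<Rightarrow> nat set" where
  "IB n l u = {1..l} \<union> {n + 1..n + (\<Sum>i=1..l. u i)}"

end

theory Submission
  imports Defs
begin

lemma convI:
  fixes k :: nat and c :: "nat \<Rightarrow> real" and v :: "nat \<Rightarrow> 'a \<Rightarrow> real"
  assumes "\<forall>i<k. 0 \<le> c i \<and> v i \<in> S" "(\<Sum>i<k. c i) = 1" "y = (\<lambda>j. \<Sum>i<k. c i * v i j)"
  shows "y \<in> conv S"
  unfolding conv_def
  by (rule CollectI, rule exI[of _ k], rule exI[of _ c], rule exI[of _ v]) (use assms in simp)

lemma convE:
  fixes y :: "'a \<Rightarrow> real"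
  assumes "y \<in> conv S"
  obtains k :: nat and c :: "nat \<Rightarrow> real" and v :: "nat \<Rightarrow> 'a \<Rightarrow> real" where "\<forall>i<k. 0 \<le> c i \<and> v i \<in> S" "(\<Sum>i<k. c i) = 1" "y = (\<lambda>j. \<Sum>i<k. c i * v i j)"
  using assms unfolding conv_def by blast

lemma conv_mono:
  assumes ST: "S \<subseteq> T" shows "conv S \<subseteq> conv T"
proof
  fix y assume "y \<in> conv S"
  then obtain k :: nat and c :: "nat \<Rightarrow> real" and v where
    h: "\<forall>i<k. 0 \<le> c i \<and> v i \<in> S" "(\<Sum>i<k. c i) = 1" "y = (\<lambda>j. \<Sum>i<k. c i * v i j)"
    by (rule convE)
  have "\<forall>i<k. 0 \<le> c i \<and> v i \<in> T" using h(1) ST by blast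
  then show "y \<in> conv T" by (rule convI[OF _ h(2) h(3)])
qed

lemma sum_split_add:
  fixes f :: "nat \<Rightarrow> 'a::comm_monoid_add" shows "(\<Sum>i<k1+k2. f i) = (\<Sum>i<k1. f i) + (\<Sum>i<k2. f (i + k1))"
  by (induction k2) (simp_all add: add.commute add.left_commute)

lemma conv_two:
  fixes a b :: "'a \<Rightarrow> real" and t :: real
  assumes a: "a \<in> conv S" and b: "b \<in> conv S" and t: "0 \<le> t" "t \<le> 1"
  shows "(\<lambda>j. t * a j + (1 - t) * b j) \<in> conv S"
proof -
  obtain k1 :: nat and c1 :: "nat \<Rightarrow> real" and v1 where h1: "\<forall>i<k1. 0 \<le> c1 i \<and> v1 i \<in> S" "(\<Sum>i<k1. c1 i) = 1"
     "a = (\<lambda>j. \<Sum>i<k1. c1 i * v1 i j)" using a by (rule convE)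
  obtain k2 :: nat and c2 :: "nat \<Rightarrow> real" and v2 where h2: "\<forall>i<k2. 0 \<le> c2 i \<and> v2 i \<in> S" "(\<Sum>i<k2. c2 i) = 1"
     "b = (\<lambda>j. \<Sum>i<k2. c2 i * v2 i j)" using b by (rule convE)
  define c where "c i = (if i < k1 then t * c1 i else (1-t) * c2 (i - k1))" for i
  define v where "v i = (if i < k1 then v1 i else v2 (i - k1))" for i
  have 1: "\<forall>i<k1+k2. 0 \<le> c i \<and> v i \<in> S"
  proof (intro allI impI)
    fix i assume "i < k1 + k2"
    then show "0 \<le> c i \<and> v i \<in> S"
      using h1(1) h2(1) t unfolding c_def v_def by (cases "i < k1") auto
  qed
  have s1: "(\<Sum>i<k1. c i) = t" unfolding c_def using h1(2) by (simp add: sum_distrib_left[symmetric])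
  have s2: "(\<Sum>i<k2. c (i + k1)) = 1 - t" unfolding c_def using h2(2) by (simp add: sum_distrib_left[symmetric])
  have 2: "(\<Sum>i<k1+k2. c i) = 1"
    unfolding sum_split_add s1 s2 by simp
  have 3: "(\<lambda>j. t * a j + (1 - t) * b j) = (\<lambda>j. \<Sum>i<k1+k2. c i * v i j)"
  proof
    fix j
    have "(\<Sum>i<k1. c i * v i j) = (\<Sum>i<k1. t * (c1 i * v1 i j))"
      by (rule sum.cong) (auto simp: c_def v_def)
    also have "\<dots> = t * a j" unfolding h1(3) by (simp only: sum_distrib_left)
    finally have e1: "(\<Sum>i<k1. c i * v i j) = t * a j" .
    have "(\<Sum>i<k2. c (i + k1) * v (i + k1) j) = (\<Sum>i<k2. (1 - t) * (c2 i * v2 i j))"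
      by (rule sum.cong) (auto simp: c_def v_def)
    also have "\<dots> = (1 - t) * b j" unfolding h2(3) by (simp only: sum_distrib_left)
    finally have e2: "(\<Sum>i<k2. c (i + k1) * v (i + k1) j) = (1 - t) * b j" .
    show "t * a j + (1 - t) * b j = (\<Sum>i<k1+k2. c i * v i j)"
      unfolding sum_split_add e1 e2 ..
  qed
  show ?thesis by (rule convI[OF 1 2 3])
qed


lemma conv_base: "S \<subseteq> conv S"
proof
  fix y assume y: "y \<in> S"
  have 1: "\<forall>i<(1::nat). 0 \<le> (\<lambda>_. 1::real) i \<and> (\<lambda>_. y) i \<in> S" using y by simp
  have 2: "(\<Sum>i<(1::nat). (\<lambda>_. 1::real) i) = 1" by simp
  have 3: "y = (\<lambda>j. \<Sum>i<(1::nat). (\<lambda>_. 1::real) i * (\<lambda>_. y) i j)" by simp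
  show "y \<in> conv S" by (rule convI[OF 1 2 3])
qed

lemma conv_conv: "conv (conv S) \<subseteq> conv S"
proof -
  have main: "\<forall>(c::nat \<Rightarrow> real) v. (\<forall>i<k. 0 \<le> c i \<and> v i \<in> conv S) \<longrightarrow> (\<Sum>i<k. c i) = 1 \<longrightarrow>
           (\<lambda>j. \<Sum>i<k. c i * v i j) \<in> conv S" for k
  proof (induction k)
    case 0 then show ?case by simp
  next
    case (Suc k)
    show ?case
    proof (intro allI impI)
      fix c :: "nat \<Rightarrow> real" and v
      assume h: "\<forall>i<Suc k. 0 \<le> c i \<and> v i \<in> conv S" "(\<Sum>i<Suc k. c i) = 1"
      define s where "s = (\<Sum>i<k. c i)"
      have s0: "0 \<le> s" unfolding s_def using h(1) by (intro sum_nonneg) auto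
      have sk: "s + c k = 1" using h(2) unfolding s_def by simp
      have ck: "0 \<le> c k" using h(1) by simp
      have vk: "v k \<in> conv S" using h(1) by simp
      show "(\<lambda>j. \<Sum>i<Suc k. c i * v i j) \<in> conv S"
      proof (cases "s = 0")
        case True
        have "\<forall>i\<in>{..<k}. c i = 0" using h(1) True unfolding s_def
          by (subst (asm) sum_nonneg_eq_0_iff) auto
        then have "(\<lambda>j. \<Sum>i<Suc k. c i * v i j) = v k" using sk True by auto
        then show ?thesis using vk by simp
      next
        case False
        then have spos: "0 < s" using s0 by simp
        have a1: "\<forall>i<k. 0 \<le> c i / s \<and> v i \<in> conv S" using h(1) spos by simp
        have a2: "(\<Sum>i<k. c i / s) = 1" using spos unfolding s_def[symmetric] sum_divide_distrib[symmetric] by simp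
        have IH: "(\<lambda>j. \<Sum>i<k. (c i / s) * v i j) \<in> conv S"
          using Suc.IH[rule_format, of "\<lambda>i. c i / s" v] a1 a2 by simp
        have "(\<lambda>j. s * (\<Sum>i<k. (c i / s) * v i j) + (1 - s) * v k j) \<in> conv S"
          using conv_two[OF IH vk, of s] s0 sk ck by simp
        moreover have "(\<lambda>j. s * (\<Sum>i<k. (c i / s) * v i j) + (1 - s) * v k j) = (\<lambda>j. \<Sum>i<Suc k. c i * v i j)"
        proof
          fix j
          have "s * (\<Sum>i<k. (c i / s) * v i j) = (\<Sum>i<k. c i * v i j)"
            unfolding sum_distrib_left using spos by (intro sum.cong) auto
          then show "s * (\<Sum>i<k. (c i / s) * v i j) + (1 - s) * v k j = (\<Sum>i<Suc k. c i * v i j)"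
            using sk by simp
        qed
        ultimately show ?thesis by simp
      qed
    qed
  qed
  show ?thesis
  proof
    fix y assume "y \<in> conv (conv S)"
    then obtain k :: nat and c :: "nat \<Rightarrow> real" and v where
      h: "\<forall>i<k. 0 \<le> c i \<and> v i \<in> conv S" "(\<Sum>i<k. c i) = 1" "y = (\<lambda>j. \<Sum>i<k. c i * v i j)"
      by (rule convE)
    show "y \<in> conv S" unfolding h(3) using main h(1) h(2) by blast
  qed
qed

lemma comb_affine:
  fixes a :: "'a \<Rightarrow> real" and c :: "nat \<Rightarrow> real"
  assumes "(\<Sum>t<k. c t) = 1"
  shows "(\<Sum>j\<in>K. a j * (\<Sum>t<k. c t * v t j)) + cst = (\<Sum>t<k. c t * ((\<Sum>j\<in>K. a j * v t j) + cst))"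
proof -
  have "(\<Sum>t<k. c t * ((\<Sum>j\<in>K. a j * v t j) + cst)) = (\<Sum>t<k. \<Sum>j\<in>K. a j * (c t * v t j)) + (\<Sum>t<k. c t) * cst"
    by (simp add: distrib_left sum.distrib sum_distrib_left sum_distrib_right mult.assoc mult.left_commute)
  also have "\<dots> = (\<Sum>j\<in>K. a j * (\<Sum>t<k. c t * v t j)) + cst"
    using assms by (simp add: sum.swap[of _ "{..<k}"] sum_distrib_left)
  finally show ?thesis by simp
qed

lemma conv_face:
  fixes F :: "('a \<Rightarrow> real) \<Rightarrow> real"
  assumes F: "\<And>y. F y = (\<Sum>j\<in>K. a j * y j) + cst"
    and y: "y \<in> conv T" and pos: "\<forall>v\<in>T. 0 \<le> F v" and le: "F y \<le> 0"
  shows "y \<in> conv {v\<in>T. F v = 0}"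
proof -
  obtain k :: nat and c :: "nat \<Rightarrow> real" and v where
    h: "\<forall>i<k. 0 \<le> c i \<and> v i \<in> T" "(\<Sum>i<k. c i) = 1" "y = (\<lambda>j. \<Sum>i<k. c i * v i j)"
    using y by (rule convE)
  have Fy: "F y = (\<Sum>t<k. c t * F (v t))"
    unfolding F h(3) by (rule comb_affine[OF h(2)])
  have nn: "\<forall>t\<in>{..<k}. 0 \<le> c t * F (v t)" using h(1) pos by simp
  have z: "\<forall>t\<in>{..<k}. c t * F (v t) = 0"
    using sum_nonneg_eq_0_iff[of "{..<k}" "\<lambda>t. c t * F (v t)"] nn Fy le
      sum_nonneg[of "{..<k}" "\<lambda>t. c t * F (v t)"] by simp
  obtain t0 where t0: "t0 < k" "c t0 \<noteq> 0"
  proof -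
    have "\<not> (\<forall>t<k. c t = 0)"
    proof
      assume "\<forall>t<k. c t = 0"
      then have "(\<Sum>i<k. c i) = 0" by simp
      then show False using h(2) by simp
    qed
    then show ?thesis using that by auto
  qed
  define v' where "v' t = (if c t = 0 then v t0 else v t)" for t
  have Ft0: "F (v t0) = 0" using z t0 by auto
  have 1: "\<forall>i<k. 0 \<le> c i \<and> v' i \<in> {v\<in>T. F v = 0}"
    using h(1) z Ft0 t0 unfolding v'_def by auto
  have 3: "y = (\<lambda>j. \<Sum>i<k. c i * v' i j)"
    unfolding h(3) v'_def by (intro ext sum.cong) auto
  show ?thesis by (rule convI[OF 1 h(2) 3])
qed


definition aff :: "(nat \<Rightarrow> int) \<Rightarrow> int \<Rightarrow> nat set \<Rightarrow> (nat \<Rightarrow> real) \<Rightarrow> real" where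
  "aff \<pi> \<pi>0 J y = (\<Sum>j\<in>J. real_of_int (\<pi> j) * y j) - real_of_int \<pi>0"

lemma SC_sub:
  assumes "\<forall>j. j \<notin> J \<longrightarrow> \<pi> j = 0"
  shows "SC Y J \<subseteq> conv (Y - split_set \<pi> J \<pi>0)"
proof
  fix y assume "y \<in> SC Y J"
  moreover have "conv (Y - split_set \<pi> J \<pi>0) \<in> {conv (Y - split_set \<pi> J \<pi>0) | \<pi> \<pi>0. \<forall>j. j \<notin> J \<longrightarrow> \<pi> j = 0}"
    using assms by blast
  ultimately show "y \<in> conv (Y - split_set \<pi> J \<pi>0)" unfolding SC_def by blast
qed

lemma SC_iter_0: "SC_iter 0 X J = X" by (simp add: SC_iter_def)
lemma SC_iter_Suc: "SC_iter (Suc k) X J = SC (SC_iter k X J) J" by (simp add: SC_iter_def)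

lemma SC_convex: "conv (SC Y J) \<subseteq> SC Y J"
proof
  fix y assume y: "y \<in> conv (SC Y J)"
  show "y \<in> SC Y J" unfolding SC_def
  proof
    fix C assume "C \<in> {conv (Y - split_set \<pi> J \<pi>0) | \<pi> \<pi>0. \<forall>j. j \<notin> J \<longrightarrow> \<pi> j = 0}"
    then obtain \<pi> \<pi>0 where C: "C = conv (Y - split_set \<pi> J \<pi>0)" and p: "\<forall>j. j \<notin> J \<longrightarrow> \<pi> j = 0" by blast
    have "y \<in> conv (conv (Y - split_set \<pi> J \<pi>0))" using conv_mono[OF SC_sub[OF p]] y by blast
    then show "y \<in> C" unfolding C using conv_conv by blast
  qed
qed

lemma SC_int:
  assumes "finite J"
  shows "{y\<in>Y. \<forall>j\<in>J. y j \<in> \<int>} \<subseteq> SC Y J"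
proof
  fix y assume y: "y \<in> {y\<in>Y. \<forall>j\<in>J. y j \<in> \<int>}"
  show "y \<in> SC Y J" unfolding SC_def
  proof
    fix C assume "C \<in> {conv (Y - split_set \<pi> J \<pi>0) | \<pi> \<pi>0. \<forall>j. j \<notin> J \<longrightarrow> \<pi> j = 0}"
    then obtain \<pi> \<pi>0 where C: "C = conv (Y - split_set \<pi> J \<pi>0)" by blast
    have "(\<Sum>j\<in>J. real_of_int (\<pi> j) * y j) \<in> \<int>" using y by (intro Ints_sum Ints_mult) auto
    then obtain z where z: "(\<Sum>j\<in>J. real_of_int (\<pi> j) * y j) = real_of_int z" by (auto elim: Ints_cases)
    have "\<not> (real_of_int \<pi>0 < real_of_int z \<and> real_of_int z < real_of_int \<pi>0 + 1)"
    proof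
      assume a: "real_of_int \<pi>0 < real_of_int z \<and> real_of_int z < real_of_int \<pi>0 + 1"
      then have "\<pi>0 < z" by simp
      moreover have "z < \<pi>0 + 1" using a by (metis of_int_1 of_int_add of_int_less_iff)
      ultimately show False by simp
    qed
    then have "y \<notin> split_set \<pi> J \<pi>0" unfolding split_set_def using z by simp
    then have "y \<in> Y - split_set \<pi> J \<pi>0" using y by blast
    then show "y \<in> C" unfolding C using conv_base by blast
  qed
qed

lemma balas:
  fixes fs :: "((nat \<Rightarrow> int) \<times> int) list"
  assumes J: "finite J"
    and supp: "\<forall>f\<in>set fs. \<forall>j. j \<notin> J \<longrightarrow> fst f j = 0"
    and bnd: "\<forall>f\<in>set fs. \<forall>y\<in>X. 0 \<le> aff (fst f) (snd f) J y \<and> aff (fst f) (snd f) J y \<le> 1"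
  shows "SC_iter (length fs) X J \<subseteq> conv {y\<in>X. \<forall>f\<in>set fs. aff (fst f) (snd f) J y \<in> {0,1}}"
proof -
  define T where "T t = {y\<in>X. \<forall>s<t. aff (fst (fs!s)) (snd (fs!s)) J y \<in> {0,1}}" for t
  have "t \<le> length fs \<Longrightarrow> SC_iter t X J \<subseteq> conv (T t)" for t
  proof (induction t)
    case 0
    then show ?case unfolding SC_iter_0 T_def using conv_base by auto
  next
    case (Suc t)
    then have t: "t < length fs" by simp
    obtain \<pi> \<pi>0 where f: "fs ! t = (\<pi>, \<pi>0)" by (cases "fs ! t") auto
    have ft: "(\<pi>, \<pi>0) \<in> set fs" using t f nth_mem by metis
    have p: "\<forall>j. j \<notin> J \<longrightarrow> \<pi> j = 0" using supp ft by force
    have bd: "\<forall>y\<in>X. 0 \<le> aff \<pi> \<pi>0 J y \<and> aff \<pi> \<pi>0 J y \<le> 1" using bnd ft by force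
    have IH: "SC_iter t X J \<subseteq> conv (T t)" using Suc by simp
    have key: "SC_iter t X J - split_set \<pi> J \<pi>0 \<subseteq> conv (T (Suc t))"
    proof
      fix y assume y: "y \<in> SC_iter t X J - split_set \<pi> J \<pi>0"
      then have yc: "y \<in> conv (T t)" using IH by blast
      have "\<not> (0 < aff \<pi> \<pi>0 J y \<and> aff \<pi> \<pi>0 J y < 1)" using y unfolding split_set_def aff_def by auto
      then have cases: "aff \<pi> \<pi>0 J y \<le> 0 \<or> 1 \<le> aff \<pi> \<pi>0 J y" by linarith
      have TX: "T t \<subseteq> X" unfolding T_def by blast
      show "y \<in> conv (T (Suc t))"
      proof (cases "aff \<pi> \<pi>0 J y \<le> 0")
        case True
        have "y \<in> conv {v\<in>T t. aff \<pi> \<pi>0 J v = 0}"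
          by (rule conv_face[where F="aff \<pi> \<pi>0 J" and K=J and a="\<lambda>j. real_of_int (\<pi> j)" and cst="- real_of_int \<pi>0"])
             (use yc bd TX True in \<open>auto simp: aff_def\<close>)
        moreover have "{v\<in>T t. aff \<pi> \<pi>0 J v = 0} \<subseteq> T (Suc t)"
          unfolding T_def using f by (auto simp: less_Suc_eq)
        ultimately show ?thesis using conv_mono by blast
      next
        case False
        then have ge: "1 \<le> aff \<pi> \<pi>0 J y" using cases by simp
        have "y \<in> conv {v\<in>T t. 1 - aff \<pi> \<pi>0 J v = 0}"
          by (rule conv_face[where F="\<lambda>v. 1 - aff \<pi> \<pi>0 J v" and K=J and a="\<lambda>j. - real_of_int (\<pi> j)" and cst="real_of_int \<pi>0 + 1"])
             (use yc bd TX ge in \<open>auto simp: aff_def sum_negf\<close>)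
        moreover have "{v\<in>T t. 1 - aff \<pi> \<pi>0 J v = 0} \<subseteq> T (Suc t)"
          unfolding T_def using f by (auto simp: less_Suc_eq)
        ultimately show ?thesis using conv_mono by blast
      qed
    qed
    have "SC_iter (Suc t) X J \<subseteq> conv (SC_iter t X J - split_set \<pi> J \<pi>0)"
      unfolding SC_iter_Suc by (rule SC_sub[OF p])
    also have "\<dots> \<subseteq> conv (conv (T (Suc t)))" by (rule conv_mono[OF key])
    also have "\<dots> \<subseteq> conv (T (Suc t))" by (rule conv_conv)
    finally show ?case .
  qed
  then have "SC_iter (length fs) X J \<subseteq> conv (T (length fs))" by simp
  moreover have "T (length fs) = {y\<in>X. \<forall>f\<in>set fs. aff (fst f) (snd f) J y \<in> {0,1}}"
    unfolding T_def by (simp add: all_set_conv_all_nth)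
  ultimately show ?thesis by simp
qed


lemma det_Ints:
  fixes A :: "real mat"
  assumes A: "A \<in> carrier_mat n n" and I: "\<forall>i<n. \<forall>j<n. A $$ (i,j) \<in> \<int>"
  shows "det A \<in> \<int>"
  unfolding det_def'[OF A]
proof (intro Ints_sum Ints_mult Ints_prod)
  fix p assume "p \<in> {p. p permutes {0..<n}}"
  then have p: "p permutes {0..<n}" by simp
  show "signof p \<in> (\<int> :: real set)" by simp
  fix i assume i: "i \<in> {0..<n}"
  then have "p i \<in> {0..<n}" using permutes_in_image[OF p] by simp
  then show "A $$ (i, p i) \<in> \<int>" using I i by simp
qed

lemma adj_Ints:
  fixes A :: "real mat"
  assumes A: "A \<in> carrier_mat n n" and I: "\<forall>i<n. \<forall>j<n. A $$ (i,j) \<in> \<int>"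
    and ij: "i < n" "j < n"
  shows "adj_mat A $$ (i,j) \<in> \<int>"
proof -
  have e: "adj_mat A $$ (i,j) = cofactor A j i" unfolding adj_mat_def using A ij by simp
  have D: "mat_delete A j i \<in> carrier_mat (n-1) (n-1)" using mat_delete_carrier[OF A] .
  have "\<forall>a<n-1. \<forall>b<n-1. mat_delete A j i $$ (a,b) \<in> \<int>"
  proof (intro allI impI)
    fix a b assume ab: "a < n - 1" "b < n - 1"
    have "mat_delete A j i $$ (a,b) = A $$ (if a < j then a else Suc a, if b < i then b else Suc b)"
      unfolding mat_delete_def using A ab by simp
    moreover have "(if a < j then a else Suc a) < n" "(if b < i then b else Suc b) < n" using ab by auto
    ultimately show "mat_delete A j i $$ (a,b) \<in> \<int>" using I by simp
  qed
  then have "det (mat_delete A j i) \<in> \<int>" using det_Ints[OF D] by blast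
  then show ?thesis unfolding e cofactor_def by (intro Ints_mult) auto
qed

lemma solve_unimod:
  fixes M :: "real mat" and bb :: "nat \<Rightarrow> real"
  assumes M: "M \<in> carrier_mat u u" and I: "\<forall>i<u. \<forall>j<u. M $$ (i,j) \<in> \<int>"
    and D: "det M = 1 \<or> det M = -1" and bI: "\<forall>c<u. bb c \<in> \<int>"
  shows "\<exists>g::nat\<Rightarrow>int. \<forall>c<u. (\<Sum>r<u. real_of_int (g r) * M $$ (r,c)) = bb c"
proof -
  define gr where "gr r = det M * (\<Sum>s<u. bb s * adj_mat M $$ (s,r))" for r
  have grI: "gr r \<in> \<int>" if r: "r < u" for r
    unfolding gr_def using D bI adj_Ints[OF M I _ r]
    by (intro Ints_mult Ints_sum) auto
  define g where "g r = \<lfloor>gr r\<rfloor>" for r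
  have g: "real_of_int (g r) = gr r" if "r < u" for r
    using grI[OF that] unfolding g_def by (auto elim: Ints_cases)
  have adjM: "(\<Sum>r<u. adj_mat M $$ (s,r) * M $$ (r,c)) = det M * (if s = c then 1 else 0)"
    if "s < u" "c < u" for s c
  proof -
    have aA: "adj_mat M \<in> carrier_mat u u" using adj_mat(1)[OF M] .
    have "(adj_mat M * M) $$ (s,c) = (\<Sum>r<u. adj_mat M $$ (s,r) * M $$ (r,c))"
      using aA M that by (simp add: scalar_prod_def atLeast0LessThan)
    moreover have "(adj_mat M * M) $$ (s,c) = det M * (if s = c then 1 else 0)"
      unfolding adj_mat(3)[OF M] using that by simp
    ultimately show ?thesis by simp
  qed
  have "\<forall>c<u. (\<Sum>r<u. real_of_int (g r) * M $$ (r,c)) = bb c"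
  proof (intro allI impI)
    fix c assume c: "c < u"
    have "(\<Sum>r<u. real_of_int (g r) * M $$ (r,c)) = (\<Sum>r<u. gr r * M $$ (r,c))"
      using g by simp
    also have "\<dots> = (\<Sum>r<u. \<Sum>s<u. det M * bb s * adj_mat M $$ (s,r) * M $$ (r,c))"
      unfolding gr_def by (simp add: sum_distrib_left sum_distrib_right mult.assoc)
    also have "\<dots> = (\<Sum>s<u. \<Sum>r<u. det M * bb s * adj_mat M $$ (s,r) * M $$ (r,c))"
      by (rule sum.swap)
    also have "\<dots> = det M * (\<Sum>s<u. bb s * (\<Sum>r<u. adj_mat M $$ (s,r) * M $$ (r,c)))"
      by (simp add: sum_distrib_left mult.assoc)
    also have "\<dots> = det M * (\<Sum>s<u. bb s * (det M * (if s = c then 1 else 0)))"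
      using adjM c by simp
    also have "\<dots> = det M * (\<Sum>s<u. (if s = c then det M * bb c else 0))"
      by (intro arg_cong[where f="\<lambda>x. det M * x"] sum.cong) auto
    also have "\<dots> = det M * det M * bb c" using c by simp
    also have "\<dots> = bb c" using D by auto
    finally show "(\<Sum>r<u. real_of_int (g r) * M $$ (r,c)) = bb c" .
  qed
  then show ?thesis by blast
qed


lemma binary_digits_mod: "(\<Sum>k<d. 2^k * ((j::nat) div 2^k mod 2)) = j mod 2^d"
proof (induction d)
  case 0 then show ?case by simp
next
  case (Suc d)
  have "j mod 2^(Suc d) = j mod (2^d * 2)" by (simp add: mult.commute)
  also have "\<dots> = 2^d * (j div 2^d mod 2) + j mod 2^d" by (rule mod_mult2_eq)
  finally show ?case using Suc by simp
qed

lemma binary_digits: "(j::nat) < 2^d \<Longrightarrow> (\<Sum>k<d. 2^k * (j div 2^k mod 2)) = j"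
  using binary_digits_mod[where d=d and j=j] by simp

lemma block:
  fixes w :: "nat \<Rightarrow> nat \<Rightarrow> real" and g :: "nat \<Rightarrow> nat \<Rightarrow> real" and z :: "nat \<Rightarrow> real"
  assumes z: "z \<in> conv ((\<lambda>j. (\<lambda>k. if k = 0 then real j else if k \<in> {1..uu} then w j k else 0)) ` {0..uu})"
  and g: "\<forall>k. \<forall>c<uu. (\<Sum>r<uu. g k r * (w (c+1) (r+1) - w 0 (r+1))) = real ((c+1) div 2^k mod 2)"
  shows "\<forall>k. 0 \<le> (\<Sum>r<uu. g k r * (z (r+1) - w 0 (r+1))) \<and> (\<Sum>r<uu. g k r * (z (r+1) - w 0 (r+1))) \<le> 1"
    and "uu < 2^d \<Longrightarrow> z 0 = (\<Sum>k<d. 2^k * (\<Sum>r<uu. g k r * (z (r+1) - w 0 (r+1))))"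
proof -
  define vert where "vert j = (\<lambda>k. if k = 0 then real j else if k \<in> {1..uu} then w j k else 0)" for j
  obtain K :: nat and c :: "nat \<Rightarrow> real" and v where
    h: "\<forall>i<K. 0 \<le> c i \<and> v i \<in> vert ` {0..uu}" "(\<Sum>i<K. c i) = 1" "z = (\<lambda>j. \<Sum>i<K. c i * v i j)"
    using z unfolding vert_def[symmetric] by (rule convE)
  define jt where "jt t = (SOME j. j \<le> uu \<and> v t = vert j)" for t
  have jt: "jt t \<le> uu \<and> v t = vert (jt t)" if "t < K" for t
  proof -
    have "v t \<in> vert ` {0..uu}" using h(1) that by blast
    then obtain j where "j \<in> {0..uu}" "v t = vert j" by blast
    then have "\<exists>j. j \<le> uu \<and> v t = vert j" by auto
    then show ?thesis unfolding jt_def by (rule someI_ex)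
  qed
  define bit where "bit k j = real ((j::nat) div 2^k mod 2)" for k j
  have hj: "(\<Sum>r<uu. g k r * (w j (r+1) - w 0 (r+1))) = bit k j" if "j \<le> uu" for k j
  proof (cases j)
    case 0 then show ?thesis unfolding bit_def by simp
  next
    case (Suc c)
    then show ?thesis using g that unfolding bit_def by simp
  qed
  have zr: "z (r+1) = (\<Sum>t<K. c t * w (jt t) (r+1))" if "r < uu" for r
    unfolding h(3) using jt that by (intro sum.cong) (auto simp: vert_def)
  have z0: "z 0 = (\<Sum>t<K. c t * real (jt t))"
    unfolding h(3) using jt by (intro sum.cong) (auto simp: vert_def)
  have Phi: "(\<Sum>r<uu. g k r * (z (r+1) - w 0 (r+1))) = (\<Sum>t<K. c t * bit k (jt t))" for k
  proof -
    have "(\<Sum>r<uu. g k r * (z (r+1) - w 0 (r+1))) = (\<Sum>r<uu. g k r * (\<Sum>t<K. c t * (w (jt t) (r+1) - w 0 (r+1))))"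
    proof (intro sum.cong refl)
      fix r assume r: "r \<in> {..<uu}"
      have "(\<Sum>t<K. c t * (w (jt t) (r+1) - w 0 (r+1))) = (\<Sum>t<K. c t * w (jt t) (r+1)) - (\<Sum>t<K. c t) * w 0 (r+1)"
        by (simp add: right_diff_distrib sum_subtractf sum_distrib_right)
      then show "g k r * (z (r+1) - w 0 (r+1)) = g k r * (\<Sum>t<K. c t * (w (jt t) (r+1) - w 0 (r+1)))"
        using zr r h(2) by simp
    qed
    also have "\<dots> = (\<Sum>r<uu. \<Sum>t<K. c t * (g k r * (w (jt t) (r+1) - w 0 (r+1))))"
      by (simp add: sum_distrib_left mult.left_commute)
    also have "\<dots> = (\<Sum>t<K. \<Sum>r<uu. c t * (g k r * (w (jt t) (r+1) - w 0 (r+1))))"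
      by (rule sum.swap)
    also have "\<dots> = (\<Sum>t<K. c t * (\<Sum>r<uu. g k r * (w (jt t) (r+1) - w 0 (r+1))))"
      by (simp add: sum_distrib_left)
    also have "\<dots> = (\<Sum>t<K. c t * bit k (jt t))"
      using hj jt by (intro sum.cong) auto
    finally show ?thesis .
  qed
  have bit01: "0 \<le> bit k j \<and> bit k j \<le> 1" for k j unfolding bit_def by auto
  show "\<forall>k. 0 \<le> (\<Sum>r<uu. g k r * (z (r+1) - w 0 (r+1))) \<and> (\<Sum>r<uu. g k r * (z (r+1) - w 0 (r+1))) \<le> 1"
  proof
    fix k
    have "0 \<le> (\<Sum>t<K. c t * bit k (jt t))" using h(1) bit01 by (intro sum_nonneg) auto
    moreover have "(\<Sum>t<K. c t * bit k (jt t)) \<le> (\<Sum>t<K. c t)"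
      using h(1) bit01 by (intro sum_mono) (simp add: mult_left_le)
    ultimately show "0 \<le> (\<Sum>r<uu. g k r * (z (r+1) - w 0 (r+1))) \<and> (\<Sum>r<uu. g k r * (z (r+1) - w 0 (r+1))) \<le> 1"
      unfolding Phi using h(2) by simp
  qed
  assume d: "uu < 2^d"
  have "z 0 = (\<Sum>t<K. c t * (\<Sum>k<d. 2^k * bit k (jt t)))"
    unfolding z0
  proof (intro sum.cong refl)
    fix t assume t: "t \<in> {..<K}"
    have "jt t < 2^d" using jt[of t] t d by auto
    then have "real (jt t) = real (\<Sum>k<d. 2^k * (jt t div 2^k mod 2))" using binary_digits by simp
    also have "\<dots> = (\<Sum>k<d. 2^k * bit k (jt t))" unfolding bit_def by simp
    finally show "c t * real (jt t) = c t * (\<Sum>k<d. 2^k * bit k (jt t))" by simp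
  qed
  also have "\<dots> = (\<Sum>t<K. \<Sum>k<d. 2^k * (c t * bit k (jt t)))"
    by (simp add: sum_distrib_left mult.left_commute)
  also have "\<dots> = (\<Sum>k<d. \<Sum>t<K. 2^k * (c t * bit k (jt t)))"
    by (rule sum.swap)
  also have "\<dots> = (\<Sum>k<d. 2^k * (\<Sum>r<uu. g k r * (z (r+1) - w 0 (r+1))))"
    unfolding Phi by (simp add: sum_distrib_left)
  finally show "z 0 = (\<Sum>k<d. 2^k * (\<Sum>r<uu. g k r * (z (r+1) - w 0 (r+1))))" .
qed


lemma unimod_data:
  assumes "unimodular uu BB"
  shows "\<exists>w. (\<forall>j\<le>uu. \<forall>k\<in>{1..uu}. w j k \<in> {0,1}) \<and>
     BB = conv ((\<lambda>j. (\<lambda>k. if k = 0 then real j else if k \<in> {1..uu} then w j k else 0)) ` {0..uu}) \<and>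
     (\<forall>k. \<exists>g::nat\<Rightarrow>int. \<forall>c<uu. (\<Sum>r<uu. real_of_int (g r) * (w (c+1) (r+1) - w 0 (r+1))) = real ((c+1) div 2^k mod 2))"
proof -
  obtain w :: "nat \<Rightarrow> nat \<Rightarrow> real" where w1: "\<forall>j\<le>uu. \<forall>k\<in>{1..uu}. w j k \<in> {0,1}"
    and w2: "BB = conv ((\<lambda>j. (\<lambda>k. if k = 0 then real j else if k \<in> {1..uu} then w j k else 0)) ` {0..uu})"
    and w3: "let M = mat uu uu (\<lambda>(r, c). w (c + 1) (r + 1) - w 0 (r + 1)) in
           (\<forall>r<uu. \<forall>c<uu. M $$ (r, c) \<in> \<int>) \<and> (det M = 1 \<or> det M = -1)"
    using assms unfolding unimodular_def by blast
  define M where "M = mat uu uu (\<lambda>(r, c). w (c + 1) (r + 1) - w 0 (r + 1))"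
  have MI: "\<forall>r<uu. \<forall>c<uu. M $$ (r,c) \<in> \<int>" and D: "det M = 1 \<or> det M = -1"
    using w3 unfolding M_def[symmetric] Let_def by auto
  have Mc: "M \<in> carrier_mat uu uu" unfolding M_def by simp
  have Me: "M $$ (r,c) = w (c+1) (r+1) - w 0 (r+1)" if "r < uu" "c < uu" for r c
    unfolding M_def using that by simp
  have "\<forall>k. \<exists>g::nat\<Rightarrow>int. \<forall>c<uu. (\<Sum>r<uu. real_of_int (g r) * (w (c+1) (r+1) - w 0 (r+1))) = real ((c+1) div 2^k mod 2)"
  proof
    fix k
    have bI: "\<forall>c<uu. real ((c+1) div 2^k mod 2) \<in> \<int>" by simp
    obtain g :: "nat \<Rightarrow> int" where g: "\<forall>c<uu. (\<Sum>r<uu. real_of_int (g r) * M $$ (r,c)) = real ((c+1) div 2^k mod 2)"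
      using solve_unimod[OF Mc MI D bI] by blast
    show "\<exists>g::nat\<Rightarrow>int. \<forall>c<uu. (\<Sum>r<uu. real_of_int (g r) * (w (c+1) (r+1) - w 0 (r+1))) = real ((c+1) div 2^k mod 2)"
    proof (intro exI allI impI)
      fix c assume c: "c < uu"
      have "(\<Sum>r<uu. real_of_int (g r) * (w (c+1) (r+1) - w 0 (r+1))) = (\<Sum>r<uu. real_of_int (g r) * M $$ (r,c))"
        using Me c by (intro sum.cong) auto
      then show "(\<Sum>r<uu. real_of_int (g r) * (w (c+1) (r+1) - w 0 (r+1))) = real ((c+1) div 2^k mod 2)"
        using g c by simp
    qed
  qed
  then show ?thesis using w1 w2 by blast
qed

lemma pow_bound: "(uu::nat) < 2 ^ nat \<lceil>log 2 (real (uu + 1))\<rceil>"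
proof -
  define L where "L = log 2 (real (uu + 1))"
  have L0: "0 \<le> L" unfolding L_def by simp
  have "real (uu + 1) = 2 powr L" unfolding L_def by simp
  also have "\<dots> \<le> 2 powr (real (nat \<lceil>L\<rceil>))"
  proof (intro powr_mono)
    have "L \<le> real_of_int \<lceil>L\<rceil>" by (rule le_of_int_ceiling)
    also have "\<dots> = real (nat \<lceil>L\<rceil>)" using L0 by simp
    finally show "L \<le> real (nat \<lceil>L\<rceil>)" .
  qed simp
  also have "\<dots> = real (2 ^ nat \<lceil>L\<rceil>)" by (simp add: powr_realpow)
  finally have "uu + 1 \<le> 2 ^ nat \<lceil>L\<rceil>" by linarith
  then show ?thesis unfolding L_def by simp
qed

lemma zoff_mono:
  assumes "i \<le> i'" "1 \<le> i"
  shows "zoff n u i + (\<Sum>k\<in>{i..<i'}. u k) = zoff n u i'"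
  unfolding zoff_def using sum.atLeastLessThan_concat[OF assms(2) assms(1), of u] by simp

lemma zoff_bounds:
  assumes i: "i \<in> {1..l}"
  shows "n \<le> zoff n u i" "zoff n u i + u i \<le> n + (\<Sum>k=1..l. u k)"
proof -
  show "n \<le> zoff n u i" unfolding zoff_def by simp
  have "zoff n u i + u i = n + (\<Sum>k\<in>{1..<Suc i}. u k)" unfolding zoff_def using i by simp
  also have "\<dots> \<le> n + (\<Sum>k\<in>{1..<Suc l}. u k)" using i by (intro add_left_mono sum_mono2) auto
  also have "\<dots> = n + (\<Sum>k=1..l. u k)" by (simp add: atLeastLessThanSuc_atLeastAtMost)
  finally show "zoff n u i + u i \<le> n + (\<Sum>k=1..l. u k)" .
qed

lemma zoff_disj:
  assumes "i < i'" "1 \<le> i"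
  shows "zoff n u i + u i \<le> zoff n u i'"
proof -
  have "zoff n u i + (\<Sum>k\<in>{i..<i'}. u k) = zoff n u i'" using assms by (intro zoff_mono) auto
  moreover have "u i \<le> (\<Sum>k\<in>{i..<i'}. u k)" using assms
    by (intro member_le_sum) auto
  ultimately show ?thesis by linarith
qed

lemma sum_block:
  fixes g :: "nat \<Rightarrow> int" and y :: "nat \<Rightarrow> real"
  assumes J: "finite J" and sub: "{zo+1..zo+uu} \<subseteq> J"
  shows "(\<Sum>j\<in>J. real_of_int (if zo < j \<and> j \<le> zo+uu then g (j - zo - 1) else 0) * y j)
        = (\<Sum>r<uu. real_of_int (g r) * y (zo + r + 1))"
proof -
  have "(\<Sum>j\<in>J. real_of_int (if zo < j \<and> j \<le> zo+uu then g (j - zo - 1) else 0) * y j)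
      = (\<Sum>j\<in>{zo+1..zo+uu}. real_of_int (if zo < j \<and> j \<le> zo+uu then g (j - zo - 1) else 0) * y j)"
    using J sub by (intro sum.mono_neutral_right) auto
  also have "\<dots> = (\<Sum>r<uu. real_of_int (g r) * y (zo + r + 1))"
    by (rule sum.reindex_bij_witness[of _ "\<lambda>r. zo + r + 1" "\<lambda>j. j - zo - 1"]) auto
  finally show ?thesis .
qed


lemma proj_conv: "proj_x n ` conv S \<subseteq> conv (proj_x n ` S)"
proof
  fix x assume "x \<in> proj_x n ` conv S"
  then obtain y where y: "y \<in> conv S" and x: "x = proj_x n y" by blast
  obtain k :: nat and c :: "nat \<Rightarrow> real" and v where
    h: "\<forall>i<k. 0 \<le> c i \<and> v i \<in> S" "(\<Sum>i<k. c i) = 1" "y = (\<lambda>j. \<Sum>i<k. c i * v i j)"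
    using y by (rule convE)
  have 1: "\<forall>i<k. 0 \<le> c i \<and> proj_x n (v i) \<in> proj_x n ` S" using h(1) by blast
  have 3: "x = (\<lambda>j. \<Sum>i<k. c i * proj_x n (v i) j)"
    unfolding x h(3) proj_x_def
  proof (rule ext)
    fix j show "(if j \<in> {1..n} then \<Sum>i<k. c i * v i j else 0) =
        (\<Sum>i<k. c i * (if j \<in> {1..n} then v i j else 0))" by (cases "j \<in> {1..n}") auto
  qed
  show "x \<in> conv (proj_x n ` S)" by (rule convI[OF 1 h(2) 3])
qed

lemma conv_proj: "conv (proj_x n ` S) \<subseteq> proj_x n ` conv S"
proof
  fix x assume "x \<in> conv (proj_x n ` S)"
  then obtain k :: nat and c :: "nat \<Rightarrow> real" and v where
    h: "\<forall>i<k. 0 \<le> c i \<and> v i \<in> proj_x n ` S" "(\<Sum>i<k. c i) = 1" "x = (\<lambda>j. \<Sum>i<k. c i * v i j)"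
    by (rule convE)
  define s where "s i = (SOME z. z \<in> S \<and> v i = proj_x n z)" for i
  have s: "s i \<in> S \<and> v i = proj_x n (s i)" if "i < k" for i
  proof -
    have "\<exists>z. z \<in> S \<and> v i = proj_x n z" using h(1) that by blast
    then show ?thesis unfolding s_def by (rule someI_ex)
  qed
  define y where "y = (\<lambda>j. \<Sum>i<k. c i * s i j)"
  have "y \<in> conv S" unfolding y_def by (rule convI) (use h(1,2) s in auto)
  moreover have "x = proj_x n y"
    unfolding h(3) y_def proj_x_def
  proof (rule ext)
    fix j
    show "(\<Sum>i<k. c i * v i j) = (if j \<in> {1..n} then \<Sum>i<k. c i * s i j else 0)"
      using s unfolding proj_x_def by (auto intro!: sum.cong)
  qed
  ultimately show "x \<in> proj_x n ` conv S" by blast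
qed

lemma SC_iter_int:
  assumes "finite J"
  shows "{y\<in>X. \<forall>j\<in>J. y j \<in> \<int>} \<subseteq> SC_iter k X J"
proof (induction k)
  case 0 then show ?case by (simp add: SC_iter_0)
next
  case (Suc k)
  then have "{y\<in>X. \<forall>j\<in>J. y j \<in> \<int>} \<subseteq> {y\<in>SC_iter k X J. \<forall>j\<in>J. y j \<in> \<int>}" by blast
  also have "\<dots> \<subseteq> SC (SC_iter k X J) J" by (rule SC_int[OF assms])
  finally show ?case unfolding SC_iter_Suc .
qed

lemma SC_iter_convex:
  assumes "conv X \<subseteq> X"
  shows "conv (SC_iter k X J) \<subseteq> SC_iter k X J"
proof (cases k)
  case 0 then show ?thesis using assms by (simp add: SC_iter_0)
next
  case (Suc k') then show ?thesis using SC_convex[of "SC_iter k' X J" J] by (simp add: SC_iter_Suc)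
qed

lemma comb_le:
  fixes c f :: "nat \<Rightarrow> real"
  assumes "\<forall>t<k. 0 \<le> c t \<and> f t \<le> \<beta>" "(\<Sum>t<k. c t) = 1"
  shows "(\<Sum>t<k. c t * f t) \<le> \<beta>"
proof -
  have "(\<Sum>t<k. c t * f t) \<le> (\<Sum>t<k. c t * \<beta>)" using assms(1) by (intro sum_mono mult_left_mono) auto
  also have "\<dots> = \<beta>" using assms(2) by (simp add: sum_distrib_right[symmetric])
  finally show ?thesis .
qed

lemma comb_ge:
  fixes c f :: "nat \<Rightarrow> real"
  assumes "\<forall>t<k. 0 \<le> c t \<and> \<beta> \<le> f t" "(\<Sum>t<k. c t) = 1"
  shows "\<beta> \<le> (\<Sum>t<k. c t * f t)"
proof -
  have "(\<Sum>t<k. c t * \<beta>) \<le> (\<Sum>t<k. c t * f t)" using assms(1) by (intro sum_mono mult_left_mono) auto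
  moreover have "(\<Sum>t<k. c t * \<beta>) = \<beta>" using assms(2) by (simp add: sum_distrib_right[symmetric])
  ultimately show ?thesis by simp
qed

lemma PB_convex:
  assumes Bc: "\<forall>i\<in>{1..l}. conv (B i) \<subseteq> B i"
  shows "conv (PB n (polyP n m A b l u) l u B) \<subseteq> PB n (polyP n m A b l u) l u B"
proof
  fix y assume "y \<in> conv (PB n (polyP n m A b l u) l u B)"
  then obtain k :: nat and c :: "nat \<Rightarrow> real" and v where
    h: "\<forall>i<k. 0 \<le> c i \<and> v i \<in> PB n (polyP n m A b l u) l u B" "(\<Sum>i<k. c i) = 1"
       "y = (\<lambda>j. \<Sum>i<k. c i * v i j)"
    by (rule convE)
  have vP: "v t \<in> vecs (n + (\<Sum>i=1..l. u i))" "proj_x n (v t) \<in> polyP n m A b l u"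
      "\<forall>i\<in>{1..l}. blk n u i (v t) \<in> B i" if "t < k" for t
    using h(1) that unfolding PB_def by auto
  have yj: "y j = (\<Sum>t<k. c t * v t j)" for j using h(3) by simp
  have 1: "y \<in> vecs (n + (\<Sum>i=1..l. u i))"
    unfolding vecs_def
  proof (intro CollectI allI impI)
    fix j assume j: "j \<notin> {1..n + (\<Sum>i=1..l. u i)}"
    have "\<forall>t<k. v t j = 0" using vP(1) j unfolding vecs_def by blast
    then show "y j = 0" unfolding yj by simp
  qed
  have 2: "proj_x n y \<in> polyP n m A b l u"
    unfolding polyP_def
  proof (intro CollectI conjI ballI allI impI)
    show "proj_x n y \<in> vecs n" unfolding proj_x_def vecs_def by simp
  next
    fix r assume r: "r < m"
    have "(\<Sum>j=1..n. A r j * proj_x n y j) = (\<Sum>j=1..n. A r j * y j)"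
      unfolding proj_x_def by simp
    also have "\<dots> = (\<Sum>j\<in>{1..n}. A r j * (\<Sum>t<k. c t * v t j)) + 0" unfolding yj by simp
    also have "\<dots> = (\<Sum>t<k. c t * ((\<Sum>j\<in>{1..n}. A r j * v t j) + 0))" by (rule comb_affine[OF h(2)])
    also have "\<dots> \<le> b r"
    proof (rule comb_le[OF _ h(2)], intro allI impI conjI)
      fix t assume t: "t < k"
      show "0 \<le> c t" using h(1) t by simp
      have "(\<Sum>j=1..n. A r j * proj_x n (v t) j) \<le> b r" using vP(2)[OF t] r unfolding polyP_def by blast
      moreover have "(\<Sum>j=1..n. A r j * proj_x n (v t) j) = (\<Sum>j=1..n. A r j * v t j)"
        unfolding proj_x_def by simp
      ultimately show "(\<Sum>j\<in>{1..n}. A r j * v t j) + 0 \<le> b r" by simp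
    qed
    finally show "(\<Sum>j=1..n. A r j * proj_x n y j) \<le> b r" .
  next
    fix i assume i: "i \<in> {1..l}"
    have pv: "0 \<le> proj_x n (v t) i \<and> proj_x n (v t) i \<le> real (u i)" if "t < k" for t
      using vP(2)[OF that] i unfolding polyP_def by blast
    have e: "proj_x n y i = (\<Sum>t<k. c t * proj_x n (v t) i)" unfolding proj_x_def yj
      by (cases "i \<in> {1..n}") auto
    show "0 \<le> proj_x n y i" unfolding e using h(1) pv by (intro comb_ge[OF _ h(2)]) auto
    show "proj_x n y i \<le> real (u i)" unfolding e using h(1) pv by (intro comb_le[OF _ h(2)]) auto
  qed
  have 3: "\<forall>i\<in>{1..l}. blk n u i y \<in> B i"
  proof
    fix i assume i: "i \<in> {1..l}"
    have "blk n u i y = (\<lambda>j. \<Sum>t<k. c t * blk n u i (v t) j)"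
      unfolding blk_def yj by (rule ext) simp
    moreover have "(\<lambda>j. \<Sum>t<k. c t * blk n u i (v t) j) \<in> conv (B i)"
      by (rule convI[OF _ h(2) refl]) (use h(1) vP(3) i in auto)
    ultimately show "blk n u i y \<in> B i" using Bc i by auto
  qed
  show "y \<in> PB n (polyP n m A b l u) l u B" unfolding PB_def using 1 2 3 by blast
qed


theorem corollary3:
  fixes n m l :: nat and A :: "nat \<Rightarrow> nat \<Rightarrow> real" and b :: "nat \<Rightarrow> real"
    and u :: "nat \<Rightarrow> nat" and B :: "nat \<Rightarrow> (nat \<Rightarrow> real) set"
  assumes "l \<le> n"
    and "\<forall>r<m. \<forall>j\<in>{1..n}. A r j \<in> \<rat>"
    and "\<forall>r<m. b r \<in> \<rat>"
    and "\<forall>i\<in>{1..l}. 0 < u i"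
    and "\<forall>i\<in>{1..l}. B i \<in> Gamma (u i) (u i) \<and> unimodular (u i) (B i)"
  shows "proj_x n ` SC_iter (\<Sum>i=1..l. nat \<lceil>log 2 (real (u i + 1))\<rceil>) (PB n (polyP n m A b l u) l u B) (IB n l u)
         = conv (mixed_int (polyP n m A b l u) l)"
proof -
  note ln = assms(1)
  define P where "P = polyP n m A b l u"
  define X0 where "X0 = PB n P l u B"
  define J where "J = IB n l u"
  define p where "p = (\<Sum>i=1..l. u i)"
  define d where "d i = nat \<lceil>log 2 (real (u i + 1))\<rceil>" for i
  define zo where "zo i = zoff n u i" for i
  have Jfin: "finite J" unfolding J_def IB_def by simp
  have Jeq: "J = {1..l} \<union> {n + 1..n + p}" unfolding J_def IB_def p_def by simp
  have zob: "n \<le> zo i" "zo i + u i \<le> n + p" if "i \<in> {1..l}" for i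
    using zoff_bounds[OF that, of n u] unfolding zo_def p_def by auto
  define Wp where "Wp i w \<longleftrightarrow> (\<forall>j\<le>u i. \<forall>k\<in>{1..u i}. w j k \<in> {0,1}) \<and>
     B i = conv ((\<lambda>j. (\<lambda>k. if k = 0 then real j else if k \<in> {1..u i} then w j k else 0)) ` {0..u i}) \<and>
     (\<forall>k. \<exists>g::nat\<Rightarrow>int. \<forall>c<u i. (\<Sum>r<u i. real_of_int (g r) * (w (c+1) (r+1) - w 0 (r+1))) = real ((c+1) div 2^k mod 2))"
    for i and w :: "nat \<Rightarrow> nat \<Rightarrow> real"
  have exW: "\<exists>w. Wp i w" if "i \<in> {1..l}" for i
    using unimod_data[of "u i" "B i"] assms(5) that unfolding Wp_def by blast
  define W where "W i = (SOME w. Wp i w)" for i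
  have W: "Wp i (W i)" if "i \<in> {1..l}" for i
    using someI_ex[OF exW[OF that]] unfolding W_def .
  have W1: "\<forall>j\<le>u i. \<forall>k\<in>{1..u i}. W i j k \<in> {0,1}" if "i \<in> {1..l}" for i
    using W[OF that] unfolding Wp_def by blast
  have W2: "B i = conv ((\<lambda>j. (\<lambda>k. if k = 0 then real j else if k \<in> {1..u i} then W i j k else 0)) ` {0..u i})"
    if "i \<in> {1..l}" for i
    using W[OF that] unfolding Wp_def by blast
  have exG: "\<exists>g::nat\<Rightarrow>int. \<forall>c<u i. (\<Sum>r<u i. real_of_int (g r) * (W i (c+1) (r+1) - W i 0 (r+1))) = real ((c+1) div 2^k mod 2)"
    if "i \<in> {1..l}" for i k
    using W[OF that] unfolding Wp_def by blast
  define G where "G i k = (SOME g::nat\<Rightarrow>int. \<forall>c<u i. (\<Sum>r<u i. real_of_int (g r) * (W i (c+1) (r+1) - W i 0 (r+1))) = real ((c+1) div 2^k mod 2))" for i k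
  have G: "\<forall>c<u i. (\<Sum>r<u i. real_of_int (G i k r) * (W i (c+1) (r+1) - W i 0 (r+1))) = real ((c+1) div 2^k mod 2)"
    if "i \<in> {1..l}" for i k
    using someI_ex[OF exG[OF that, of k]] unfolding G_def .
  define \<pi> where "\<pi> i k j = (if zo i < j \<and> j \<le> zo i + u i then G i k (j - zo i - 1) else 0)" for i k j
  define \<pi>0 where "\<pi>0 i k = (\<Sum>r<u i. G i k r * (if W i 0 (r+1) = 1 then 1 else 0))" for i k
  define \<Phi> where "\<Phi> i k z = (\<Sum>r<u i. real_of_int (G i k r) * (z (r+1) - W i 0 (r+1)))" for i k z
  define fs where "fs = concat (map (\<lambda>i. map (\<lambda>k. (\<pi> i k, \<pi>0 i k)) [0..<d i]) [1..<Suc l])"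
  have set_fs: "set fs = {(\<pi> i k, \<pi>0 i k) | i k. i \<in> {1..l} \<and> k < d i}"
    unfolding fs_def set_concat set_map set_upt
  proof (intro equalityI subsetI)
    fix f assume "f \<in> \<Union> (set ` (\<lambda>i. map (\<lambda>k. (\<pi> i k, \<pi>0 i k)) [0..<d i]) ` {1..<Suc l})"
    then obtain i k where ik: "i \<in> {1..<Suc l}" "k \<in> {0..<d i}" "f = (\<pi> i k, \<pi>0 i k)" by auto
    then have "i \<in> {1..l}" "k < d i" by auto
    then show "f \<in> {(\<pi> i k, \<pi>0 i k) | i k. i \<in> {1..l} \<and> k < d i}" using ik(3) by blast
  next
    fix f assume "f \<in> {(\<pi> i k, \<pi>0 i k) | i k. i \<in> {1..l} \<and> k < d i}"
    then obtain i k where "f = (\<pi> i k, \<pi>0 i k)" "i \<in> {1..l}" "k < d i" by blast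
    then show "f \<in> \<Union> (set ` (\<lambda>i. map (\<lambda>k. (\<pi> i k, \<pi>0 i k)) [0..<d i]) ` {1..<Suc l})"
    proof -
      assume a: "f = (\<pi> i k, \<pi>0 i k)" "i \<in> {1..l}" "k < d i"
      have "f \<in> (\<lambda>k. (\<pi> i k, \<pi>0 i k)) ` {0..<d i}" using a by auto
      moreover have "i \<in> {1..<Suc l}" using a by auto
      ultimately show ?thesis by auto
    qed
  qed
  have len_fs: "length fs = (\<Sum>i=1..l. d i)"
  proof -
    have "length fs = sum_list (map d [1..<Suc l])"
      unfolding fs_def by (simp add: length_concat map_map comp_def del: upt_Suc)
    also have "\<dots> = sum d (set [1..<Suc l])" by (rule sum_set_upt_conv_sum_list_nat[symmetric])
    also have "\<dots> = sum d {1..l}" by (simp only: set_upt atLeastLessThanSuc_atLeastAtMost)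
    finally show ?thesis .
  qed
  have aff_eq: "aff (\<pi> i k) (\<pi>0 i k) J y = \<Phi> i k (blk n u i y)" if i: "i \<in> {1..l}" for i k y
  proof -
    have sub: "{zo i + 1..zo i + u i} \<subseteq> J" using zob[OF i] unfolding Jeq by auto
    have s1: "(\<Sum>j\<in>J. real_of_int (\<pi> i k j) * y j) = (\<Sum>r<u i. real_of_int (G i k r) * y (zo i + r + 1))"
      unfolding \<pi>_def by (rule sum_block[OF Jfin sub])
    have s2: "real_of_int (\<pi>0 i k) = (\<Sum>r<u i. real_of_int (G i k r) * W i 0 (r+1))"
      unfolding \<pi>0_def of_int_sum
    proof (intro sum.cong refl)
      fix r assume r: "r \<in> {..<u i}"
      have "W i 0 (r+1) \<in> {0,1}" using W1[OF i] r by auto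
      then show "real_of_int (G i k r * (if W i 0 (r + 1) = 1 then 1 else 0)) = real_of_int (G i k r) * W i 0 (r + 1)"
        by auto
    qed
    have s3: "blk n u i y (r+1) = y (zo i + r + 1)" if "r < u i" for r
      unfolding blk_def zo_def using that by simp
    have "aff (\<pi> i k) (\<pi>0 i k) J y = (\<Sum>r<u i. real_of_int (G i k r) * y (zo i + r + 1)) - (\<Sum>r<u i. real_of_int (G i k r) * W i 0 (r+1))"
      unfolding aff_def s1 s2 ..
    also have "\<dots> = (\<Sum>r<u i. real_of_int (G i k r) * (y (zo i + r + 1) - W i 0 (r+1)))"
      by (simp add: sum_subtractf right_diff_distrib)
    also have "\<dots> = \<Phi> i k (blk n u i y)"
      unfolding \<Phi>_def using s3 by (intro sum.cong) auto
    finally show ?thesis .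
  qed
  have blkB: "blk n u i y \<in> conv ((\<lambda>j. (\<lambda>k. if k = 0 then real j else if k \<in> {1..u i} then W i j k else 0)) ` {0..u i})"
    if "y \<in> X0" "i \<in> {1..l}" for y i
    using that W2 unfolding X0_def PB_def by auto
  have Phi_bnd: "0 \<le> \<Phi> i k (blk n u i y) \<and> \<Phi> i k (blk n u i y) \<le> 1" if "y \<in> X0" "i \<in> {1..l}" for y i k
    using block(1)[OF blkB[OF that], of "\<lambda>k r. real_of_int (G i k r)"] G[OF that(2)] unfolding \<Phi>_def by blast
  have Phi_sum: "y i = (\<Sum>k<d i. 2^k * \<Phi> i k (blk n u i y))" if "y \<in> X0" "i \<in> {1..l}" for y i
  proof -
    have "blk n u i y 0 = (\<Sum>k<d i. 2^k * \<Phi> i k (blk n u i y))"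
      using block(2)[OF blkB[OF that], of "\<lambda>k r. real_of_int (G i k r)" "d i"] G[OF that(2)] pow_bound[of "u i"]
      unfolding \<Phi>_def d_def by blast
    then show ?thesis unfolding blk_def by simp
  qed
  have supp: "\<forall>f\<in>set fs. \<forall>j. j \<notin> J \<longrightarrow> fst f j = 0"
  proof (intro ballI allI impI)
    fix f j assume f: "f \<in> set fs" and j: "j \<notin> J"
    then obtain i k where i: "i \<in> {1..l}" and fe: "f = (\<pi> i k, \<pi>0 i k)" unfolding set_fs by blast
    have "\<not> (zo i < j \<and> j \<le> zo i + u i)" using j zob[OF i] unfolding Jeq by auto
    then show "fst f j = 0" unfolding fe \<pi>_def by auto
  qed
  have bnd: "\<forall>f\<in>set fs. \<forall>y\<in>X0. 0 \<le> aff (fst f) (snd f) J y \<and> aff (fst f) (snd f) J y \<le> 1"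
  proof (intro ballI)
    fix f y assume f: "f \<in> set fs" and y: "y \<in> X0"
    then obtain i k where i: "i \<in> {1..l}" and fe: "f = (\<pi> i k, \<pi>0 i k)" unfolding set_fs by blast
    show "0 \<le> aff (fst f) (snd f) J y \<and> aff (fst f) (snd f) J y \<le> 1"
      unfolding fe using aff_eq[OF i] Phi_bnd[OF y i] by simp
  qed
  define T where "T = {y\<in>X0. \<forall>f\<in>set fs. aff (fst f) (snd f) J y \<in> {0,1}}"
  have q: "(\<Sum>i=1..l. nat \<lceil>log 2 (real (u i + 1))\<rceil>) = length fs" unfolding len_fs d_def ..
  have sub1: "SC_iter (length fs) X0 J \<subseteq> conv T"
    unfolding T_def by (rule balas[OF Jfin supp bnd])
  have sub2: "proj_x n ` T \<subseteq> mixed_int P l"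
  proof
    fix x assume "x \<in> proj_x n ` T"
    then obtain y where y: "y \<in> T" and x: "x = proj_x n y" by blast
    have yX: "y \<in> X0" using y unfolding T_def by blast
    have xP: "x \<in> P" using yX unfolding x X0_def PB_def by blast
    have "x i \<in> \<int>" if i: "i \<in> {1..l}" for i
    proof -
      have xi: "x i = y i" unfolding x proj_x_def using i ln by auto
      have "\<Phi> i k (blk n u i y) \<in> {0,1}" if k: "k < d i" for k
      proof -
        have "(\<pi> i k, \<pi>0 i k) \<in> set fs" unfolding set_fs using i k by blast
        then have "aff (\<pi> i k) (\<pi>0 i k) J y \<in> {0,1}" using y unfolding T_def by force
        then show ?thesis using aff_eq[OF i] by simp
      qed
      then have hk: "\<Phi> i k (blk n u i y) \<in> \<int>" if "k < d i" for k
        using that by fastforce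
      have "(\<Sum>k<d i. 2^k * \<Phi> i k (blk n u i y)) \<in> \<int>"
        using hk by (intro Ints_sum Ints_mult) auto
      then show ?thesis unfolding xi Phi_sum[OF yX i] .
    qed
    then show "x \<in> mixed_int P l" unfolding mixed_int_def using xP by blast
  qed
  have dir1: "proj_x n ` SC_iter (length fs) X0 J \<subseteq> conv (mixed_int P l)"
  proof -
    have "proj_x n ` SC_iter (length fs) X0 J \<subseteq> proj_x n ` conv T" using sub1 by blast
    also have "\<dots> \<subseteq> conv (proj_x n ` T)" by (rule proj_conv)
    also have "\<dots> \<subseteq> conv (mixed_int P l)" by (rule conv_mono[OF sub2])
    finally show ?thesis .
  qed
  define Z where "Z = {y\<in>X0. \<forall>j\<in>J. y j \<in> \<int>}"
  have sub3: "mixed_int P l \<subseteq> proj_x n ` Z"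
  proof
    fix x assume xm: "x \<in> mixed_int P l"
    have xP: "x \<in> P" and xint: "\<forall>i\<in>{1..l}. x i \<in> \<int>" using xm unfolding mixed_int_def by auto
    have xv: "x \<in> vecs n" and xb: "\<forall>i\<in>{1..l}. 0 \<le> x i \<and> x i \<le> real (u i)"
      using xP unfolding P_def polyP_def by auto
    define ji where "ji i = nat \<lfloor>x i\<rfloor>" for i
    have ji: "real (ji i) = x i \<and> ji i \<le> u i" if i: "i \<in> {1..l}" for i
    proof -
      have "x i \<in> \<int>" using xint i by blast
      then obtain z where z: "x i = of_int z" by (rule Ints_cases)
      have xbi: "0 \<le> x i" "x i \<le> real (u i)" using xb i by blast+
      have "0 \<le> real_of_int z" using xbi z by simp
      then have z0: "0 \<le> z" by simp
      have "real_of_int z \<le> real (u i)" using xbi z by simp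
      then have zu: "z \<le> int (u i)" by linarith
      show ?thesis unfolding ji_def z using z0 zu by simp
    qed
    define S where "S j = (\<Sum>i'\<in>{1..l}. \<Sum>r'\<in>{1..u i'}. if j = zo i' + r' then W i' (ji i') r' else 0)" for j
    define y where "y j = x j + S j" for j
    have xz: "x j = 0" if "j \<notin> {1..n}" for j using xv that unfolding vecs_def by auto
    have S_low: "S j = 0" if j: "j \<le> n" for j
    proof -
      have "(\<Sum>r'\<in>{1..u i'}. if j = zo i' + r' then W i' (ji i') r' else 0) = 0" if i': "i' \<in> {1..l}" for i'
        using zob(1)[OF i'] j by (intro sum.neutral) auto
      then show ?thesis unfolding S_def by (intro sum.neutral) auto
    qed
    have S_out: "S j = 0" if j: "j \<notin> {1..n+p}" for j
    proof -
      have "(\<Sum>r'\<in>{1..u i'}. if j = zo i' + r' then W i' (ji i') r' else 0) = 0" if i': "i' \<in> {1..l}" for i'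
        using zob[OF i'] j by (intro sum.neutral) auto
      then show ?thesis unfolding S_def by (intro sum.neutral) auto
    qed
    have S_int: "S j \<in> \<int>" for j
      unfolding S_def
    proof (intro Ints_sum)
      fix i' r' assume i': "i' \<in> {1..l}" and r': "r' \<in> {1..u i'}"
      have "W i' (ji i') r' \<in> {0,1}" using W1[OF i'] ji[OF i'] r' by auto
      then show "(if j = zo i' + r' then W i' (ji i') r' else 0) \<in> \<int>" by auto
    qed
    have S_blk: "S (zo i + r) = W i (ji i) r" if i: "i \<in> {1..l}" and r: "r \<in> {1..u i}" for i r
    proof -
      have inner: "(\<Sum>r'\<in>{1..u i'}. if zo i + r = zo i' + r' then W i' (ji i') r' else 0) = (if i' = i then W i (ji i) r else 0)"
        if i': "i' \<in> {1..l}" for i'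
      proof (cases "i' = i")
        case True
        have "(\<Sum>r'\<in>{1..u i'}. if zo i + r = zo i' + r' then W i' (ji i') r' else 0) = (\<Sum>r'\<in>{1..u i}. if r' = r then W i (ji i) r' else 0)"
          using True by (intro sum.cong) auto
        also have "\<dots> = W i (ji i) r" using r by simp
        finally show ?thesis using True by simp
      next
        case False
        have ne: "zo i + r \<noteq> zo i' + r'" if r': "r' \<in> {1..u i'}" for r'
        proof (cases "i < i'")
          case True
          have "zo i + u i \<le> zo i'" unfolding zo_def using zoff_disj[where i=i and i'=i' and n=n and u=u] True i by auto
          then show ?thesis using r r' by auto
        next
          case f2: False
          then have lt: "i' < i" using False by auto
          have "zo i' + u i' \<le> zo i" unfolding zo_def using zoff_disj[where i=i' and i'=i and n=n and u=u] lt i' by auto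
          then show ?thesis using r r' by auto
        qed
        show ?thesis using False ne by (auto intro!: sum.neutral)
      qed
      have "S (zo i + r) = (\<Sum>i'\<in>{1..l}. if i' = i then W i (ji i) r else 0)"
        unfolding S_def using inner by (intro sum.cong) auto
      also have "\<dots> = W i (ji i) r" using i by simp
      finally show ?thesis .
    qed
    have proj_y: "proj_x n y = x"
    proof
      fix j show "proj_x n y j = x j"
        unfolding proj_x_def y_def using S_low xz by auto
    qed
    have y_vec: "y \<in> vecs (n + (\<Sum>i=1..l. u i))"
      unfolding vecs_def p_def[symmetric]
    proof (intro CollectI allI impI)
      fix j assume j: "j \<notin> {1..n+p}"
      then have "j \<notin> {1..n}" by auto
      then show "y j = 0" unfolding y_def using xz S_out[OF j] by simp
    qed
    have y_blk: "blk n u i y \<in> B i" if i: "i \<in> {1..l}" for i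
    proof -
      have il: "i \<le> n" using i ln by auto
      have eqb: "blk n u i y = (\<lambda>k. if k = 0 then real (ji i) else if k \<in> {1..u i} then W i (ji i) k else 0)"
      proof
        fix k
        show "blk n u i y k = (if k = 0 then real (ji i) else if k \<in> {1..u i} then W i (ji i) k else 0)"
        proof (cases "k = 0")
          case True
          then show ?thesis unfolding blk_def y_def using S_low[OF il] ji[OF i] by simp
        next
          case False
          show ?thesis
          proof (cases "k \<in> {1..u i}")
            case True
            have "x (zo i + k) = 0" using xz zob(1)[OF i] True by auto
            then show ?thesis unfolding blk_def y_def using S_blk[OF i True] True False
              by (simp add: zo_def)
          next
            case f2: False
            then show ?thesis unfolding blk_def using False by simp
          qed
        qed
      qed
      have mem: "(\<lambda>k. if k = 0 then real (ji i) else if k \<in> {1..u i} then W i (ji i) k else 0)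
          \<in> (\<lambda>j. (\<lambda>k. if k = 0 then real j else if k \<in> {1..u i} then W i j k else 0)) ` {0..u i}"
        by (rule image_eqI[where x="ji i"]) (use ji[OF i] in auto)
      have mem2: "blk n u i y \<in> (\<lambda>j. (\<lambda>k. if k = 0 then real j else if k \<in> {1..u i} then W i j k else 0)) ` {0..u i}"
        unfolding eqb by (rule mem)
      show ?thesis unfolding W2[OF i] by (rule subsetD[OF conv_base mem2])
    qed
    have yX: "y \<in> X0" unfolding X0_def PB_def using y_vec proj_y xP y_blk by auto
    have yJ: "\<forall>j\<in>J. y j \<in> \<int>"
    proof
      fix j assume j: "j \<in> J"
      have "x j \<in> \<int>"
      proof (cases "j \<in> {1..l}")
        case True then show ?thesis using xint by simp
      next
        case False
        then have "j \<notin> {1..n}" using j unfolding Jeq by auto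
        then show ?thesis using xz by simp
      qed
      then show "y j \<in> \<int>" unfolding y_def using S_int by simp
    qed
    have "y \<in> Z" unfolding Z_def using yX yJ by blast
    then show "x \<in> proj_x n ` Z" by (rule image_eqI[where f="proj_x n", OF proj_y[symmetric]])
  qed
  have Bconv: "\<forall>i\<in>{1..l}. conv (B i) \<subseteq> B i"
  proof
    fix i assume i: "i \<in> {1..l}"
    show "conv (B i) \<subseteq> B i" unfolding W2[OF i] by (rule conv_conv)
  qed
  have X0conv: "conv X0 \<subseteq> X0" unfolding X0_def P_def by (rule PB_convex[OF Bconv])
  have dir2: "conv (mixed_int P l) \<subseteq> proj_x n ` SC_iter (length fs) X0 J"
  proof -
    have "conv (mixed_int P l) \<subseteq> conv (proj_x n ` Z)" by (rule conv_mono[OF sub3])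
    also have "\<dots> \<subseteq> conv (proj_x n ` SC_iter (length fs) X0 J)"
      unfolding Z_def by (intro conv_mono image_mono SC_iter_int[OF Jfin])
    also have "\<dots> \<subseteq> proj_x n ` conv (SC_iter (length fs) X0 J)" by (rule conv_proj)
    also have "\<dots> \<subseteq> proj_x n ` SC_iter (length fs) X0 J"
      by (intro image_mono SC_iter_convex[OF X0conv])
    finally show ?thesis .
  qed
  show ?thesis unfolding q using dir1 dir2 unfolding X0_def P_def J_def by blast
qed

end
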